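(* Let $n\ge 2$ and let $H(t)$, $0\le t\le T$, be a piecewise-continuous time-dependent Hermitian Hamiltonian on $n$ qubits that is U(1)-invariant at all times. Then $$\Delta_3=-\frac{4}{2^n}\sum_{\substack{1\le l\le n\\ l\ \text{odd}}}(l-1)\int_0^T \mathrm{Tr}[H(t)C_l]\,dt \pmod{2\pi}.$$
   Context: Qubits $1,\dots,n$, Hilbert space $(\mathbb{C}^2)^{\otimes n}$, $Z_j$ the Pauli $Z$ on qubit $j$. For $m=0,\dots,n$, $\Pi_m$ is the projector onto the span of computational basis states with exactly $m$ qubits in state $|1\rangle$ (the eigenspace of $\sum_j (I-Z_j)/2$ with eigenvalue $m$). A Hamiltonian is U(1)-invariant if it commutes with $\sum_j Z_j$. For such $H(t)$, $V=\mathcal{T}\exp(-i\int_0^T H(t)dt)$ (time-ordered exponential) satisfies $V=\bigoplus_{m=0}^n V_m$ with $V_m$ the restriction of $V$ to the range of $\Pi_m$; define $\theta_m=\arg\det(V_m)\in(-\pi,\pi]$ and $$\Delta_3=\theta_{n-1}-\theta_1-(n-2)(\theta_n-\theta_0)\pmod{2\pi}.$$ Define $C_0=I$ and for $l=1,\dots,n$, $C_l=\sum_{i_1<i_2<\cdots<i_l} Z_{i_1}Z_{i_2}\cdots Z_{i_l}$. *)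

theory Defs
  imports "HOL-Analysis.Analysis"
begin

text \<open>Qubits are the elements of a finite type 'q (so n = CARD('q)).
  Computational basis states are functions x :: 'q \<Rightarrow> bool, where x j = True
  means qubit j is in state |1>.\<close>

type_synonym ('q) op = "complex ^ ('q \<Rightarrow> bool) ^ ('q \<Rightarrow> bool)"

definition weight :: "('q::finite \<Rightarrow> bool) \<Rightarrow> nat" where
  "weight x = card {j. x j}"

definition Zop :: "'q::finite \<Rightarrow> 'q op" where
  "Zop j = (\<chi> x y. if x = y then (if x j then -1 else 1) else 0)"

text \<open>Sum over products Z_{i_1}...Z_{i_l} over all l-element sets of qubits;
  the product of the commuting diagonal matrices Z_i (i in S) is the diagonal
  matrix with entries prod_{i in S} (+-1).\<close>
definition Cl :: "nat \<Rightarrow> 'q::finite op" where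
  "Cl l = (\<Sum>S\<in>{S::'q set. card S = l}.
            (\<chi> x y. if x = y then (\<Prod>j\<in>S. if x j then -1 else 1) else 0))"

definition hermitian_op :: "'q::finite op \<Rightarrow> bool" where
  "hermitian_op A \<longleftrightarrow> (\<forall>x y. A $ x $ y = cnj (A $ y $ x))"

definition u1_invariant :: "'q::finite op \<Rightarrow> bool" where
  "u1_invariant A \<longleftrightarrow> A ** (\<Sum>j\<in>UNIV. Zop j) = (\<Sum>j\<in>UNIV. Zop j) ** A"

definition piecewise_continuous_on :: "real \<Rightarrow> (real \<Rightarrow> 'a::topological_space) \<Rightarrow> bool" where
  "piecewise_continuous_on T H \<longleftrightarrow>
     (\<exists>S. finite S \<and> S \<subseteq> {0..T} \<and> 0 \<in> S \<and> T \<in> S \<and>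
        (\<forall>a\<in>S. \<forall>b\<in>S. a < b \<and> {a<..<b} \<inter> S = {} \<longrightarrow>
           (\<exists>g. continuous_on {a..b} g \<and> (\<forall>t\<in>{a<..<b}. H t = g t))))"

text \<open>V is the time-ordered exponential of -i H on [0,T]: the continuous solution of
  V' = -i H V with V(0) = I (derivative required off a finite set, as H is only
  piecewise continuous).  The evolution operator is V T.\<close>
definition time_ordered_exp :: "real \<Rightarrow> (real \<Rightarrow> 'q::finite op) \<Rightarrow> (real \<Rightarrow> 'q op) \<Rightarrow> bool" where
  "time_ordered_exp T H V \<longleftrightarrow>
     V 0 = mat 1 \<and> continuous_on {0..T} V \<and>
     (\<exists>F. finite F \<and> (\<forall>t\<in>{0..T} - F.
        (V has_vector_derivative (mat (- \<i>) ** H t ** V t)) (at t within {0..T})))"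

text \<open>Determinant of the restriction of A to the span of basis states in S
  (Leibniz formula, as in the library definition of det).\<close>
definition det_on :: "('q::finite \<Rightarrow> bool) set \<Rightarrow> 'q op \<Rightarrow> complex" where
  "det_on S A = (\<Sum>p\<in>{p. p permutes S}. of_int (sign p) * (\<Prod>i\<in>S. A $ i $ p i))"

text \<open>theta_m = arg det(V_m) in (-pi, pi] (Arg has range (-pi,pi]).\<close>
definition theta :: "'q::finite op \<Rightarrow> nat \<Rightarrow> real" where
  "theta V m = Arg (det_on {x. weight x = m} V)"

end

theory Submission
  imports Defs "HOL-Computational_Algebra.Polynomial"
begin
lemma prod_monom1: "finite X \<Longrightarrow> (\<Prod>j\<in>X. monom (c j) 1) = monom (\<Prod>j\<in>X. c j) (card X)"
  by (induction X rule: finite_induct) (auto simp: mult_monom monom_0 one_pCons)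

lemma poly_sum_upto:
  fixes P :: "complex poly"
  assumes "degree P \<le> n"
  shows "poly P z = (\<Sum>l\<le>n. coeff P l * z ^ l)"
proof -
  have "poly P z = (\<Sum>l\<le>degree P. coeff P l * z ^ l)" by (simp add: poly_altdef)
  also have "\<dots> = (\<Sum>l\<le>n. coeff P l * z ^ l)"
    by (rule sum.mono_neutral_left) (use assms in \<open>auto simp: coeff_eq_0\<close>)
  finally show ?thesis .
qed

lemma poly_pderiv_upto:
  fixes P :: "complex poly"
  assumes "degree P \<le> n"
  shows "poly (pderiv P) z = (\<Sum>l\<le>n. of_nat l * coeff P l * z ^ (l - 1))"
proof -
  have "degree (pderiv P) \<le> n" using assms by (simp add: degree_pderiv)
  then have "poly (pderiv P) z = (\<Sum>i\<le>n. coeff (pderiv P) i * z ^ i)" by (rule poly_sum_upto)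
  also have "\<dots> = (\<Sum>i\<le>n. of_nat (Suc i) * coeff P (Suc i) * z ^ (Suc i - 1))"
    by (simp add: coeff_pderiv)
  also have "\<dots> = (\<Sum>l\<le>Suc n. of_nat l * coeff P l * z ^ (l - 1))"
    by (subst sum.atMost_Suc_shift) simp
  also have "\<dots> = (\<Sum>l\<le>n. of_nat l * coeff P l * z ^ (l - 1))"
    using assms by (simp add: coeff_eq_0)
  finally show ?thesis .
qed

lemma odd_sum_poly:
  fixes P :: "complex poly"
  assumes "degree P \<le> n"
  shows "(\<Sum>l\<in>{l. 1 \<le> l \<and> l \<le> n \<and> odd l}. (of_nat l - 1) * coeff P l)
     = (poly (pderiv P) 1 + poly (pderiv P) (-1)) / 2 - (poly P 1 - poly P (-1)) / 2"
proof -
  have set: "{l. 1 \<le> l \<and> l \<le> n \<and> odd l} = {l\<in>{..n}. 1 \<le> l \<and> odd l}" by auto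
  have "(\<Sum>l\<in>{l. 1 \<le> l \<and> l \<le> n \<and> odd l}. (of_nat l - 1) * coeff P l)
      = (\<Sum>l\<le>n. (if 1 \<le> l \<and> odd l then (of_nat l - 1) * coeff P l else 0))"
    unfolding set by (rule sum.inter_filter) simp
  also have "\<dots> = (\<Sum>l\<le>n. coeff P l * ((of_nat l * 1 ^ (l - 1) + of_nat l * (-1) ^ (l - 1)) / 2
                   - (1 ^ l - (-1) ^ l) / 2))"
  proof (rule sum.cong[OF refl])
    fix l assume "l \<in> {..n}"
    show "(if 1 \<le> l \<and> odd l then (of_nat l - 1) * coeff P l else 0) =
        coeff P l * ((of_nat l * 1 ^ (l - 1) + of_nat l * (-1) ^ (l - 1)) / 2 - (1 ^ l - (-1) ^ l) / 2)"
    proof (cases "even l")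
      case True
      then show ?thesis
      proof (cases "l = 0")
        case False
        with True have "odd (l - 1)" by simp
        with True show ?thesis by simp
      qed simp
    next
      case False
      then have "l \<ge> 1" "even (l - 1)" by (auto elim: oddE)
      with False show ?thesis by (simp add: field_simps)
    qed
  qed
  also have "\<dots> = (poly (pderiv P) 1 + poly (pderiv P) (-1)) / 2 - (poly P 1 - poly P (-1)) / 2"
    unfolding poly_sum_upto[OF assms] poly_pderiv_upto[OF assms]
    by (simp add: sum_divide_distrib sum_distrib_left sum_subtractf sum.distrib[symmetric] algebra_simps diff_divide_distrib add_divide_distrib)
  finally show ?thesis .
qed

definition sgnz :: "('q::finite \<Rightarrow> bool) \<Rightarrow> 'q \<Rightarrow> complex" where
  "sgnz x j = (if x j then -1 else 1)"

definition dcoef :: "nat \<Rightarrow> nat \<Rightarrow> complex" where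
  "dcoef n w = (if w = n - 1 then 1 else 0) - (if w = 1 then 1 else 0)
      - (of_nat n - 2) * ((if w = n then 1 else 0) - (if w = 0 then 1 else 0))"

lemma genpoly_coeff:
  fixes x :: "'q::finite \<Rightarrow> bool"
  shows "coeff (\<Prod>j\<in>UNIV. monom (sgnz x j) 1 + 1) l = (\<Sum>S\<in>{S::'q set. card S = l}. \<Prod>j\<in>S. sgnz x j)"
proof -
  have "(\<Prod>j\<in>UNIV. monom (sgnz x j) 1 + 1) = (\<Sum>X\<in>Pow UNIV. (\<Prod>j\<in>X. monom (sgnz x j) 1) * (\<Prod>j\<in>UNIV-X. 1))"
    by (rule prod_add) simp
  also have "\<dots> = (\<Sum>X\<in>Pow UNIV. monom (\<Prod>j\<in>X. sgnz x j) (card X))"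
    by (simp add: prod_monom1[of _ "sgnz x", simplified])
  finally have "coeff (\<Prod>j\<in>UNIV. monom (sgnz x j) 1 + 1) l = (\<Sum>X\<in>UNIV. if card X = l then (\<Prod>j\<in>X. sgnz x j) else 0)"
    by (simp add: coeff_sum)
  also have "\<dots> = (\<Sum>S\<in>{S\<in>UNIV. card S = l}. \<Prod>j\<in>S. sgnz x j)"
    by (rule sum.inter_filter[symmetric]) simp
  finally show ?thesis by simp
qed

lemma genpoly_eq:
  fixes x :: "'q::finite \<Rightarrow> bool"
  shows "(\<Prod>j\<in>UNIV. monom (sgnz x j) 1 + 1) = [:1, -1:] ^ weight x * [:1, 1:] ^ (CARD('q) - weight x)"
proof -
  have "(\<Prod>j\<in>UNIV. monom (sgnz x j) 1 + 1) = (\<Prod>j\<in>UNIV. if x j then [:1, -1:] else [:1, 1:])"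
    by (rule prod.cong) (auto simp: sgnz_def monom_Suc monom_0 one_pCons)
  also have "\<dots> = (\<Prod>j\<in>UNIV \<inter> {j. x j}. [:1, -1:]) * (\<Prod>j\<in>UNIV \<inter> - {j. x j}. [:1, 1:])"
    by (rule prod.If_cases) simp
  also have "\<dots> = [:1, -1:] ^ weight x * [:1, 1:] ^ (CARD('q) - weight x)"
    by (simp add: weight_def Compl_eq_Diff_UNIV card_Diff_subset)
  finally show ?thesis .
qed

lemma degree_genpoly: "degree ([:1, -1:] ^ a * [:1, 1::complex:] ^ b) \<le> a + b"
proof -
  have 1: "degree ([:1, -1::complex:] ^ a) \<le> a" using degree_power_le[of "[:1,-1::complex:]" a] by simp
  have 2: "degree ([:1, 1::complex:] ^ b) \<le> b" using degree_power_le[of "[:1,1::complex:]" b] by simp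
  show ?thesis using degree_mult_le[of "[:1, -1::complex:] ^ a" "[:1, 1::complex:] ^ b"] 1 2 by linarith
qed

lemma krawtchouk_eval:
  assumes n: "a + b = n" "n \<ge> 2"
  shows "(poly (pderiv ([:1, -1:] ^ a * [:1, 1::complex:] ^ b)) 1
          + poly (pderiv ([:1, -1:] ^ a * [:1, 1::complex:] ^ b)) (-1)) / 2
       - (poly ([:1, -1:] ^ a * [:1, 1::complex:] ^ b) 1 - poly ([:1, -1:] ^ a * [:1, 1::complex:] ^ b) (-1)) / 2
       = 2 ^ n / 4 * dcoef n a"
proof -
  have e: "poly (pderiv ([:1, -1:] ^ a * [:1, 1::complex:] ^ b)) z =
     (1 - z) ^ a * (of_nat b * (1 + z) ^ (b - 1)) - (1 + z) ^ b * (of_nat a * (1 - z) ^ (a - 1))" for z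
    by (simp add: pderiv_mult pderiv_power pderiv_pCons algebra_simps)
  have f: "poly ([:1, -1:] ^ a * [:1, 1::complex:] ^ b) z = (1 - z) ^ a * (1 + z) ^ b" for z
    by simp
  show ?thesis
    unfolding e f dcoef_def
  proof -
    consider "a = 0" | "a = 1" | i where "a = Suc (Suc i)" by (metis One_nat_def not0_implies_Suc)
    then show "((1 - 1) ^ a * (of_nat b * (1 + 1) ^ (b - 1)) - (1 + 1) ^ b * (of_nat a * (1 - 1) ^ (a - 1)) +
     ((1 - - 1) ^ a * (of_nat b * (1 + - 1) ^ (b - 1)) - (1 + - 1) ^ b * (of_nat a * (1 - - 1) ^ (a - 1)))) / 2 -
    ((1 - 1) ^ a * (1 + 1) ^ b - (1 - - 1) ^ a * (1 + - 1) ^ b) / 2 =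
    2 ^ n / 4 * ((if a = n - 1 then 1 else 0) - (if a = 1 then 1 else 0) -
       (of_nat n - 2) * ((if a = n then 1 else 0) - (if a = 0 then 1 else 0))::complex)"
    proof cases
      case 1
      with n obtain k where k: "b = Suc (Suc k)" "n = Suc (Suc k)" by (metis add_0 le_iff_add add_2_eq_Suc)
      show ?thesis using 1 k by (simp add: field_simps)
    next
      case 2
      with n obtain k where k: "b = Suc k" "n = Suc (Suc k)" by (metis Suc_1 Suc_eq_plus1_left add_le_cancel_left le_iff_add plus_1_eq_Suc)
      show ?thesis using 2 k by (cases k) (simp_all add: field_simps)
    next
      case 3
      consider "b = 0" | "b = 1" | j where "b = Suc (Suc j)" by (metis One_nat_def not0_implies_Suc)
      then show ?thesis
      proof cases
        case 1 then show ?thesis using 3 n(1)[symmetric] by (simp add: field_simps)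
      next
        case 2 then show ?thesis using 3 n(1)[symmetric] by (simp add: field_simps)
      next
        case b: 3 then show ?thesis using 3 n(1)[symmetric] by (simp add: field_simps)
      qed
    qed
  qed
qed

lemma krawtchouk:
  fixes x :: "'q::finite \<Rightarrow> bool"
  assumes "CARD('q) \<ge> 2"
  shows "(\<Sum>l\<in>{l. 1 \<le> l \<and> l \<le> CARD('q) \<and> odd l}. (of_nat l - 1) * (\<Sum>S\<in>{S::'q set. card S = l}. \<Prod>j\<in>S. sgnz x j))
     = 2 ^ CARD('q) / 4 * dcoef CARD('q) (weight x)"
proof -
  have w: "weight x \<le> CARD('q)" unfolding weight_def by (rule card_mono) auto
  let ?P = "[:1, -1:] ^ weight x * [:1, 1::complex:] ^ (CARD('q) - weight x)"
  have deg: "degree ?P \<le> CARD('q)" using degree_genpoly[of "weight x" "CARD('q) - weight x"] w by simp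
  have "(\<Sum>l\<in>{l. 1 \<le> l \<and> l \<le> CARD('q) \<and> odd l}. (of_nat l - 1) * (\<Sum>S\<in>{S::'q set. card S = l}. \<Prod>j\<in>S. sgnz x j))
     = (\<Sum>l\<in>{l. 1 \<le> l \<and> l \<le> CARD('q) \<and> odd l}. (of_nat l - 1) * coeff ?P l)"
    unfolding genpoly_eq[symmetric] genpoly_coeff by (rule refl)
  also have "\<dots> = 2 ^ CARD('q) / 4 * dcoef CARD('q) (weight x)"
    unfolding odd_sum_poly[OF deg]
    by (rule krawtchouk_eval) (use w assms in auto)
  finally show ?thesis .
qed

lemma Cl_entry:
  "(Cl l :: 'q::finite op) $ x $ y = (if x = y then (\<Sum>S\<in>{S::'q set. card S = l}. \<Prod>j\<in>S. sgnz x j) else 0)"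
  by (simp add: Cl_def sgnz_def)

lemma trace_Cl:
  fixes A :: "'q::finite op"
  shows "trace (A ** Cl l) = (\<Sum>x\<in>UNIV. A $ x $ x * (\<Sum>S\<in>{S::'q set. card S = l}. \<Prod>j\<in>S. sgnz x j))"
  by (simp add: trace_def matrix_matrix_mult_def Cl_entry if_distrib cong: if_cong)

lemma trace_Cl_sum:
  fixes A :: "'q::finite op"
  assumes "CARD('q) \<ge> 2"
  shows "(\<Sum>l\<in>{l. 1 \<le> l \<and> l \<le> CARD('q) \<and> odd l}. (of_nat l - 1) * trace (A ** Cl l))
     = 2 ^ CARD('q) / 4 * (\<Sum>x\<in>UNIV. A $ x $ x * dcoef CARD('q) (weight x))"
proof -
  have "(\<Sum>l\<in>{l. 1 \<le> l \<and> l \<le> CARD('q) \<and> odd l}. (of_nat l - 1) * trace (A ** Cl l))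
     = (\<Sum>x\<in>UNIV. A $ x $ x * (\<Sum>l\<in>{l. 1 \<le> l \<and> l \<le> CARD('q) \<and> odd l}. (of_nat l - 1) * (\<Sum>S\<in>{S::'q set. card S = l}. \<Prod>j\<in>S. sgnz x j)))"
    unfolding trace_Cl by (simp add: sum_distrib_left algebra_simps) (rule sum.swap)
  also have "\<dots> = 2 ^ CARD('q) / 4 * (\<Sum>x\<in>UNIV. A $ x $ x * dcoef CARD('q) (weight x))"
    unfolding krawtchouk[OF assms] by (simp add: sum_distrib_left algebra_simps)
  finally show ?thesis .
qed

lemma det_on_id:
  assumes "finite S"
  shows "det_on S (mat 1 :: 'q::finite op) = 1"
proof -
  have "det_on S (mat 1 :: 'q op) = (\<Sum>p\<in>{p. p permutes S}. if p = id then 1 else 0)"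
    unfolding det_on_def
  proof (rule sum.cong[OF refl])
    fix p assume p: "p \<in> {p. p permutes S}"
    show "of_int (sign p) * (\<Prod>i\<in>S. (mat 1 :: 'q op) $ i $ p i) = (if p = id then 1 else 0)"
    proof (cases "p = id")
      case True then show ?thesis by (simp add: mat_def sign_id)
    next
      case False
      then obtain i where "p i \<noteq> i" by (metis eq_id_iff)
      moreover have "i \<in> S" using p \<open>p i \<noteq> i\<close> by (auto simp: permutes_def)
      ultimately have "(\<Prod>i\<in>S. (mat 1 :: 'q op) $ i $ p i) = 0"
        using assms by (intro prod_zero) (auto simp: mat_def)
      with False show ?thesis by simp
    qed
  qed
  also have "\<dots> = 1" using permutes_id[of S] by (simp add: sum.delta'[where S = "{p. p permutes S}", simplified] )
  finally show ?thesis .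
qed

lemma det_on_rows_alt:
  fixes A :: "'q::finite op"
  assumes S: "finite S" and i: "i \<in> S" and k: "k \<in> S" and ik: "i \<noteq> k"
  shows "(\<Sum>p\<in>{p. p permutes S}. of_int (sign p) * (A $ k $ p i * (\<Prod>j\<in>S - {i}. A $ j $ p j))) = 0"
proof -
  define f where "f p = of_int (sign p) * (A $ k $ p i * (\<Prod>j\<in>S - {i}. A $ j $ p j))" for p
  let ?t = "Transposition.transpose i k"
  have tp: "?t permutes S" using i k by (rule permutes_swap_id)
  have neg: "f (p \<circ> ?t) = - f p" if p: "p permutes S" for p
  proof -
    have "permutation p" using p S permutation_permutes by blast
    moreover have "permutation ?t" using tp S permutation_permutes by blast
    ultimately have sg: "sign (p \<circ> ?t) = - sign p" using ik by (simp add: sign_compose sign_swap_id)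
    have fin: "finite (S - {i})" using S by simp
    have kin: "k \<in> S - {i}" using k ik by simp
    have r1: "(\<Prod>j\<in>S - {i}. A $ j $ (p \<circ> ?t) j) = A $ k $ p i * (\<Prod>j\<in>S - {i} - {k}. A $ j $ p j)"
      using prod.remove[OF fin kin, of "\<lambda>j. A $ j $ (p \<circ> ?t) j"]
      by (simp add: transpose_def)
    have r2: "(\<Prod>j\<in>S - {i}. A $ j $ p j) = A $ k $ p k * (\<Prod>j\<in>S - {i} - {k}. A $ j $ p j)"
      using prod.remove[OF fin kin, of "\<lambda>j. A $ j $ p j"] by simp
    show ?thesis unfolding f_def r1 r2 sg by (simp add: transpose_def algebra_simps)
  qed
  have inv: "p \<circ> ?t \<circ> ?t = p" for p :: "('q \<Rightarrow> bool) \<Rightarrow> ('q \<Rightarrow> bool)"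
    by (simp add: comp_assoc)
  have "(\<Sum>p\<in>{p. p permutes S}. f p) = (\<Sum>p\<in>{p. p permutes S}. f (p \<circ> ?t))"
    by (rule sum.reindex_bij_witness[where i = "\<lambda>p. p \<circ> ?t" and j = "\<lambda>p. p \<circ> ?t"])
       (auto simp: inv permutes_compose[OF tp])
  also have "\<dots> = - (\<Sum>p\<in>{p. p permutes S}. f p)"
    by (simp add: neg sum_negf)
  finally have "(\<Sum>p\<in>{p. p permutes S}. f p) = 0" by simp
  then show ?thesis unfolding f_def .
qed

lemma zsum_entry:
  "(\<Sum>j\<in>UNIV. Zop j :: 'q::finite op) $ x $ y =
     (if x = y then of_nat CARD('q) - 2 * of_nat (weight x) else 0)"
proof -
  have "(\<Sum>j\<in>UNIV. Zop j :: 'q op) $ x $ y = (if x = y then (\<Sum>j\<in>UNIV. if x j then -1 else 1) else 0)"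
    by (simp add: Zop_def)
  also have "(\<Sum>j\<in>UNIV. if x j then -1 else 1 :: complex) =
      (\<Sum>j\<in>UNIV \<inter> {j. x j}. -1) + (\<Sum>j\<in>UNIV \<inter> - {j. x j}. 1)"
    by (rule sum.If_cases) simp
  also have "\<dots> = of_nat CARD('q) - 2 * of_nat (weight x)"
    by (simp add: weight_def Compl_eq_Diff_UNIV card_Diff_subset of_nat_diff card_mono)
  finally show ?thesis .
qed

lemma u1_block:
  fixes A :: "'q::finite op"
  assumes "u1_invariant A" "weight x \<noteq> weight y"
  shows "A $ x $ y = 0"
proof -
  define Z where "Z = (\<Sum>j\<in>UNIV. Zop j :: 'q op)"
  have Zent: "Z $ k $ l = (if k = l then of_nat CARD('q) - 2 * of_nat (weight k) else 0)" for k l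
    unfolding Z_def by (rule zsum_entry)
  have "(A ** Z) $ x $ y = (Z ** A) $ x $ y"
    using assms(1) by (simp add: u1_invariant_def Z_def)
  then have "A $ x $ y * (of_nat CARD('q) - 2 * of_nat (weight y)) = (of_nat CARD('q) - 2 * of_nat (weight x)) * A $ x $ y"
  proof -
    have "(A ** Z) $ x $ y = (\<Sum>k\<in>UNIV. if k = y then A $ x $ k * (of_nat CARD('q) - 2 * of_nat (weight y)) else 0)"
      unfolding matrix_matrix_mult_def vec_lambda_beta by (rule sum.cong) (auto simp: Zent)
    moreover have "(Z ** A) $ x $ y = (\<Sum>k\<in>UNIV. if k = x then (of_nat CARD('q) - 2 * of_nat (weight x)) * A $ k $ y else 0)"
      unfolding matrix_matrix_mult_def vec_lambda_beta by (rule sum.cong) (auto simp: Zent)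
    ultimately show ?thesis using \<open>(A ** Z) $ x $ y = (Z ** A) $ x $ y\<close> by auto
  qed
  then have "A $ x $ y * (2 * of_nat (weight x) - 2 * of_nat (weight y)) = 0"
    by (simp add: algebra_simps)
  moreover have "(2 * of_nat (weight x) - 2 * of_nat (weight y) :: complex) \<noteq> 0"
    using assms(2) by simp
  ultimately show ?thesis by simp
qed

lemma entry_deriv:
  fixes M :: "real \<Rightarrow> 'q::finite op"
  assumes "(M has_vector_derivative D) F"
  shows "((\<lambda>s. M s $ i $ j) has_vector_derivative D $ i $ j) F"
proof -
  have "bounded_linear (\<lambda>X::'q op. X $ i $ j)"
    using bounded_linear_compose[OF bounded_linear_vec_nth bounded_linear_vec_nth] .
  from bounded_linear.has_vector_derivative[OF this assms] show ?thesis by simp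
qed

lemma det_on_deriv:
  fixes M :: "real \<Rightarrow> 'q::finite op" and A :: "'q op"
  assumes der: "(M has_vector_derivative (A ** M t)) (at t within U)"
    and blk: "\<And>i k. i \<in> S \<Longrightarrow> k \<notin> S \<Longrightarrow> A $ i $ k = 0"
  shows "((\<lambda>s. det_on S (M s)) has_vector_derivative ((\<Sum>i\<in>S. A $ i $ i) * det_on S (M t))) (at t within U)"
proof -
  have S: "finite S" by simp
  define D where "D = A ** M t"
  define E where "E = (\<Sum>p\<in>{p. p permutes S}. of_int (sign p) *
        (\<Sum>i\<in>S. D $ i $ p i * (\<Prod>j\<in>S - {i}. M t $ j $ p j)))"
  have ed: "((\<lambda>s. M s $ i $ j) has_derivative (\<lambda>h. h *\<^sub>R D $ i $ j)) (at t within U)" for i j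
    using entry_deriv[OF der] unfolding D_def has_vector_derivative_def .
  have "((\<lambda>s. det_on S (M s)) has_derivative (\<lambda>y. y *\<^sub>R E)) (at t within U)"
    unfolding det_on_def
  proof (rule has_derivative_eq_rhs)
    show "((\<lambda>s. \<Sum>p\<in>{p. p permutes S}. of_int (sign p) * (\<Prod>i\<in>S. M s $ i $ p i)) has_derivative
       (\<lambda>y. \<Sum>p\<in>{p. p permutes S}. of_int (sign p) * (\<Sum>i\<in>S. (y *\<^sub>R D $ i $ p i) * (\<Prod>j\<in>S - {i}. M t $ j $ p j))))
       (at t within U)"
      by (intro has_derivative_sum has_derivative_mult_right has_derivative_prod ed)
    show "(\<lambda>y. \<Sum>p\<in>{p. p permutes S}. of_int (sign p) * (\<Sum>i\<in>S. (y *\<^sub>R D $ i $ p i) * (\<Prod>j\<in>S - {i}. M t $ j $ p j)))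
        = (\<lambda>y. y *\<^sub>R E)"
      by (rule ext) (simp add: E_def scaleR_conv_of_real sum_distrib_left algebra_simps)
  qed
  moreover have "E = (\<Sum>i\<in>S. A $ i $ i) * det_on S (M t)"
  proof -
    have Dent: "D $ i $ c = (\<Sum>k\<in>S. A $ i $ k * M t $ k $ c)" if "i \<in> S" for i c
    proof -
      have "D $ i $ c = (\<Sum>k\<in>UNIV. A $ i $ k * M t $ k $ c)"
        by (simp add: D_def matrix_matrix_mult_def)
      also have "\<dots> = (\<Sum>k\<in>S. A $ i $ k * M t $ k $ c)"
        by (rule sum.mono_neutral_right) (use blk that in auto)
      finally show ?thesis .
    qed
    have "E = (\<Sum>p\<in>{p. p permutes S}. \<Sum>i\<in>S. \<Sum>k\<in>S.
                A $ i $ k * (of_int (sign p) * (M t $ k $ p i * (\<Prod>j\<in>S - {i}. M t $ j $ p j))))"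
      unfolding E_def by (intro sum.cong refl) (simp add: Dent sum_distrib_left sum_distrib_right algebra_simps)
    also have "\<dots> = (\<Sum>i\<in>S. \<Sum>k\<in>S. A $ i $ k * (\<Sum>p\<in>{p. p permutes S}.
                 of_int (sign p) * (M t $ k $ p i * (\<Prod>j\<in>S - {i}. M t $ j $ p j))))"
      by (simp add: sum_distrib_left sum.swap[of _ "{p. p permutes S}"])
    also have "\<dots> = (\<Sum>i\<in>S. \<Sum>k\<in>S. if k = i then A $ i $ i * det_on S (M t) else 0)"
    proof (intro sum.cong refl)
      fix i k assume i: "i \<in> S" and k: "k \<in> S"
      show "A $ i $ k * (\<Sum>p\<in>{p. p permutes S}.
                 of_int (sign p) * (M t $ k $ p i * (\<Prod>j\<in>S - {i}. M t $ j $ p j))) =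
            (if k = i then A $ i $ i * det_on S (M t) else 0)"
      proof (cases "k = i")
        case True
        then show ?thesis using i
          by (simp add: det_on_def prod.remove[OF S i])
      next
        case False
        then show ?thesis using det_on_rows_alt[OF S i k] by simp
      qed
    qed
    also have "\<dots> = (\<Sum>i\<in>S. A $ i $ i) * det_on S (M t)"
      by (simp add: sum_distrib_right)
    finally show ?thesis .
  qed
  ultimately show ?thesis unfolding has_vector_derivative_def by simp
qed

lemma pc_integrable_aux:
  fixes H :: "real \<Rightarrow> 'a::banach"
  assumes S: "finite S"
    and piece: "\<forall>a\<in>S. \<forall>b\<in>S. a < b \<and> {a<..<b} \<inter> S = {} \<longrightarrow>
           (\<exists>g. continuous_on {a..b} g \<and> (\<forall>t\<in>{a<..<b}. H t = g t))"
  shows "card (S \<inter> {a<..<b}) = N \<Longrightarrow> a \<in> S \<Longrightarrow> b \<in> S \<Longrightarrow> a \<le> b \<Longrightarrow> H integrable_on {a..b}"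
proof (induction N arbitrary: a b rule: less_induct)
  case (less N)
  show ?case
  proof (cases "S \<inter> {a<..<b} = {}")
    case True
    show ?thesis
    proof (cases "a = b")
      case True
      then show ?thesis using integrable_on_refl[of H a] by simp
    next
      case False
      with less.prems have ab: "a < b" by simp
      with piece less.prems True obtain g where g: "continuous_on {a..b} g" "\<forall>t\<in>{a<..<b}. H t = g t"
        by (metis inf_commute)
      have gi: "g integrable_on {a..b}" using g(1) by (rule integrable_continuous_real)
      show ?thesis
      proof (rule integrable_spike_finite[OF _ _ gi])
        show "finite {a, b}" by simp
      qed (use g(2) in auto)
    qed
  next
    case False
    then obtain c where c: "c \<in> S" "a < c" "c < b" by auto
    have lt1: "card (S \<inter> {a<..<c}) < N"
      unfolding less.prems(1)[symmetric]
      by (rule psubset_card_mono) (use S c in auto)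
    have lt2: "card (S \<inter> {c<..<b}) < N"
      unfolding less.prems(1)[symmetric]
      by (rule psubset_card_mono) (use S c in auto)
    have "H integrable_on {a..c}" using less.IH[OF lt1 refl] less.prems c by simp
    moreover have "H integrable_on {c..b}" using less.IH[OF lt2 refl] less.prems c by simp
    ultimately show ?thesis using c by (intro Henstock_Kurzweil_Integration.integrable_combine[of a c b H]) auto
  qed
qed

lemma pc_integrable:
  fixes H :: "real \<Rightarrow> 'a::banach"
  assumes "piecewise_continuous_on T H" "0 \<le> T"
  shows "H integrable_on {0..T}"
proof -
  from assms(1) obtain S where S: "finite S" "S \<subseteq> {0..T}" "0 \<in> S" "T \<in> S"
     and piece: "\<forall>a\<in>S. \<forall>b\<in>S. a < b \<and> {a<..<b} \<inter> S = {} \<longrightarrow>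
           (\<exists>g. continuous_on {a..b} g \<and> (\<forall>t\<in>{a<..<b}. H t = g t))"
    unfolding piecewise_continuous_on_def by blast
  show ?thesis using pc_integrable_aux[OF S(1) piece refl S(3) S(4) assms(2)] .
qed

lemma pc_isCont:
  fixes H :: "real \<Rightarrow> 'a::topological_space"
  assumes "piecewise_continuous_on T H"
  obtains K where "finite K" "\<And>t. t \<in> {0..T} - K \<Longrightarrow> isCont H t"
proof -
  from assms(1) obtain S where S: "finite S" "S \<subseteq> {0..T}" "0 \<in> S" "T \<in> S"
     and piece: "\<forall>a\<in>S. \<forall>b\<in>S. a < b \<and> {a<..<b} \<inter> S = {} \<longrightarrow>
           (\<exists>g. continuous_on {a..b} g \<and> (\<forall>t\<in>{a<..<b}. H t = g t))"
    unfolding piecewise_continuous_on_def by blast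
  have "isCont H t" if t: "t \<in> {0..T} - S" for t
  proof -
    have t0: "0 < t" "t < T" using t S by (auto simp: order_le_less)
    define a where "a = Max {s\<in>S. s < t}"
    define b where "b = Min {s\<in>S. t < s}"
    have fa: "finite {s\<in>S. s < t}" "{s\<in>S. s < t} \<noteq> {}" using S t0 by auto
    have fb: "finite {s\<in>S. t < s}" "{s\<in>S. t < s} \<noteq> {}" using S t0 by auto
    have a: "a \<in> S" "a < t" using Max_in[OF fa] unfolding a_def by auto
    have b: "b \<in> S" "t < b" using Min_in[OF fb] unfolding b_def by auto
    have empty: "{a<..<b} \<inter> S = {}"
    proof (rule ccontr)
      assume "{a<..<b} \<inter> S \<noteq> {}"
      then obtain s where s: "s \<in> S" "a < s" "s < b" by auto
      show False
      proof (cases "s < t")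
        case True
        then have "s \<le> a" unfolding a_def using fa s by (intro Max_ge) auto
        with s show False by simp
      next
        case False
        with t s have "t < s" by (cases "s = t") auto
        then have "b \<le> s" unfolding b_def using fb s by (intro Min_le) auto
        with s show False by simp
      qed
    qed
    from piece a b empty obtain g where g: "continuous_on {a..b} g" "\<forall>s\<in>{a<..<b}. H s = g s"
      by (metis less_trans)
    have "isCont g t" using continuous_on_interior[OF g(1)] a b by simp
    moreover have "eventually (\<lambda>s. H s = g s) (nhds t)"
      using g(2) a b unfolding eventually_nhds by (intro exI[of _ "{a<..<b}"]) auto
    ultimately show ?thesis using isCont_cong by blast
  qed
  then show ?thesis using that S(1) by blast
qed

lemma entry_bl: "bounded_linear (\<lambda>X::'q::finite op. X $ i $ j)"
  using bounded_linear_compose[OF bounded_linear_vec_nth bounded_linear_vec_nth] .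

lemma cont_entry:
  fixes V :: "real \<Rightarrow> 'q::finite op"
  assumes "continuous_on A V"
  shows "continuous_on A (\<lambda>t. V t $ i $ j)"
  using continuous_on_compose[OF assms linear_continuous_on[OF entry_bl[of i j]]] by (simp add: o_def)

lemma det_on_cont:
  fixes V :: "real \<Rightarrow> 'q::finite op"
  assumes "continuous_on A V"
  shows "continuous_on A (\<lambda>t. det_on B (V t))"
  unfolding det_on_def by (intro continuous_intros cont_entry assms)

lemma mat_mult_entry: "(mat c ** A :: 'q::finite op) $ i $ k = c * A $ i $ k"
proof -
  have "(mat c ** A :: 'q::finite op) $ i $ k = (\<Sum>l\<in>UNIV. if l = i then c * A $ l $ k else 0)"
    unfolding matrix_matrix_mult_def mat_def vec_lambda_beta by (rule sum.cong) auto
  then show ?thesis by simp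
qed

lemma det_evolution:
  fixes H V :: "real \<Rightarrow> 'q::finite op" and T :: real
  assumes T0: "0 \<le> T"
    and pc: "piecewise_continuous_on T H"
    and u1: "\<forall>t\<in>{0..T}. u1_invariant (H t)"
    and V: "time_ordered_exp T H V"
  shows "det_on {x. weight x = m} (V T) =
     exp (- \<i> * integral {0..T} (\<lambda>t. \<Sum>x\<in>{x. weight x = m}. H t $ x $ x))"
proof -
  define B where "B = {x::'q \<Rightarrow> bool. weight x = m}"
  define \<phi> where "\<phi> = (\<lambda>A::'q op. \<Sum>x\<in>B. A $ x $ x)"
  define \<tau> where "\<tau> = (\<lambda>t. \<phi> (H t))"
  have blphi: "bounded_linear \<phi>" unfolding \<phi>_def by (intro bounded_linear_sum entry_bl)
  have Hint: "H integrable_on {0..T}" by (rule pc_integrable[OF pc T0])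
  have tint: "\<tau> integrable_on {0..T}"
    using integrable_linear[OF Hint blphi] by (simp add: \<tau>_def o_def)
  obtain K where K: "finite K" "\<And>t. t \<in> {0..T} - K \<Longrightarrow> isCont H t"
    using pc_isCont[OF pc] by blast
  have tcont: "isCont \<tau> t" if "t \<in> {0..T} - K" for t
    unfolding \<tau>_def using isCont_o2[OF K(2)[OF that] linear_continuous_at[OF blphi]] .
  from V obtain F where V0: "V 0 = mat 1" and Vc: "continuous_on {0..T} V" and F: "finite F"
    and Vd: "\<And>t. t \<in> {0..T} - F \<Longrightarrow> (V has_vector_derivative (mat (- \<i>) ** H t ** V t)) (at t within {0..T})"
    unfolding time_ordered_exp_def by blast
  define I where "I = (\<lambda>t. integral {0..t} \<tau>)"
  define G where "G = (\<lambda>t. det_on B (V t) * exp (\<i> * I t))"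
  have Icont: "continuous_on {0..T} I" unfolding I_def by (rule indefinite_integral_continuous_1[OF tint])
  have Gcont: "continuous_on {0..T} G"
    unfolding G_def by (intro continuous_intros det_on_cont Vc Icont)
  have Gder: "(G has_derivative (\<lambda>h. 0)) (at t within {0..T})" if t: "t \<in> {0..T} - (F \<union> K \<union> {0, T})" for t
  proof -
    have tint': "t \<in> interior {0..T}" using t by auto
    have Vd': "(V has_vector_derivative ((mat (- \<i>) ** H t) ** V t)) (at t)"
      using Vd[of t] t at_within_interior[OF tint'] by auto
    have blk: "(mat (- \<i>) ** H t) $ i $ k = 0" if "i \<in> B" "k \<notin> B" for i k
      using u1_block[of "H t" i k] u1 t that by (auto simp: mat_mult_entry B_def)
    have dd: "((\<lambda>s. det_on B (V s)) has_vector_derivative (- \<i> * \<tau> t) * det_on B (V t)) (at t)"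
      using det_on_deriv[OF Vd' blk]
      by (simp add: mat_mult_entry \<tau>_def \<phi>_def sum_distrib_left)
    have Id: "(I has_vector_derivative \<tau> t) (at t)"
    proof -
      have "continuous (at t within {0..T}) \<tau>"
        using tcont[of t] t continuous_at_imp_continuous_at_within by blast
      then have "(I has_vector_derivative \<tau> t) (at t within {0..T} - {})"
        unfolding I_def using t by (intro integral_has_vector_derivative_continuous_at[OF tint]) auto
      then show ?thesis using at_within_interior[OF tint'] by simp
    qed
    have Ed: "((\<lambda>s. exp (\<i> * I s)) has_vector_derivative (\<i> * \<tau> t) * exp (\<i> * I t)) (at t)"
      using field_vector_diff_chain_at[OF has_vector_derivative_mult_right[OF Id, of \<i>] DERIV_exp]
      by (simp add: o_def)
    have "(G has_vector_derivative 0) (at t)"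
      unfolding G_def
      using has_vector_derivative_mult[OF dd Ed] by (simp add: algebra_simps)
    then show ?thesis
      unfolding has_vector_derivative_def by (simp add: has_derivative_at_withinI)
  qed
  have "G T = G 0"
    by (rule has_derivative_zero_unique_strong_interval[where k = "F \<union> K \<union> {0, T}", OF _ Gcont refl Gder]) (use F K T0 in auto)
  also have "G 0 = 1" unfolding G_def I_def using V0 by (simp add: det_on_id)
  finally have "det_on B (V T) * exp (\<i> * I T) = 1" unfolding G_def .
  then have "det_on B (V T) = exp (- \<i> * I T)"
    by (metis exp_minus_inverse mult.commute mult_minus_left mult_1 mult.assoc exp_not_eq_zero
        nonzero_eq_divide_eq divide_inverse)
  then show ?thesis unfolding I_def \<tau>_def \<phi>_def B_def .
qed

lemma entry_integrable:
  fixes H :: "real \<Rightarrow> 'q::finite op"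
  assumes "H integrable_on S"
  shows "(\<lambda>t. H t $ i $ j) integrable_on S"
  using integrable_linear[OF assms entry_bl[of i j]] by (simp add: o_def)

lemma sum_weight_filter:
  "(\<Sum>x\<in>{x::'q::finite \<Rightarrow> bool. weight x = m}. f x) = (\<Sum>x\<in>UNIV. if weight x = m then f x else 0)"
  using sum.inter_filter[of "UNIV :: ('q \<Rightarrow> bool) set" f "\<lambda>x. weight x = m"] by simp

theorem mainTheorem2:
  fixes H V :: "real \<Rightarrow> 'q::finite op" and T :: real
  defines "n \<equiv> CARD('q)"
  assumes n2: "n \<ge> 2"
    and T0: "0 \<le> T"
    and pc: "piecewise_continuous_on T H"
    and herm: "\<forall>t\<in>{0..T}. hermitian_op (H t)"
    and u1: "\<forall>t\<in>{0..T}. u1_invariant (H t)"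
    and V: "time_ordered_exp T H V"
  shows "\<exists>k::int.
    complex_of_real
      (theta (V T) (n - 1) - theta (V T) 1
        - (real n - 2) * (theta (V T) n - theta (V T) 0) - 2 * pi * of_int k)
    = - (4 / 2 ^ n) * (\<Sum>l\<in>{l. 1 \<le> l \<and> l \<le> n \<and> odd l}.
          (of_nat l - 1) * integral {0..T} (\<lambda>t. trace (H t ** Cl l)))"
proof -
  define \<tau> where "\<tau> m t = (\<Sum>x\<in>{x::'q \<Rightarrow> bool. weight x = m}. H t $ x $ x)" for m t
  have Hint: "H integrable_on {0..T}" by (rule pc_integrable[OF pc T0])
  have eint: "(\<lambda>t. H t $ i $ j) integrable_on {0..T}" for i j by (rule entry_integrable[OF Hint])
  have tint: "\<tau> m integrable_on {0..T}" for m
    unfolding \<tau>_def by (intro integrable_sum eint) simp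
  define r where "r m = Re (integral {0..T} (\<tau> m))" for m
  have real_int: "integral {0..T} (\<tau> m) = complex_of_real (r m)" for m
  proof -
    have "Im (integral {0..T} (\<tau> m)) = integral {0..T} (Im \<circ> \<tau> m)"
      by (rule integral_linear[OF tint bounded_linear_Im, symmetric])
    also have "\<dots> = integral {0..T} (\<lambda>t. 0::real)"
    proof (rule integral_cong)
      fix t assume t: "t \<in> {0..T}"
      have "Im (H t $ x $ x) = 0" for x
      proof -
        have e: "H t $ x $ x = cnj (H t $ x $ x)" using herm t unfolding hermitian_op_def by blast
        have "Im (H t $ x $ x) = Im (cnj (H t $ x $ x))" using arg_cong[OF e, of Im] .
        then have "Im (H t $ x $ x) = - Im (H t $ x $ x)" by simp
        then show ?thesis by simp
      qed
      then show "(Im \<circ> \<tau> m) t = 0" by (simp add: \<tau>_def Im_sum)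
    qed
    finally have "Im (integral {0..T} (\<tau> m)) = 0" by simp
    then show ?thesis unfolding r_def by (simp add: complex_eq_iff)
  qed
  have th: "\<exists>k::int. theta (V T) m = - r m - 2 * pi * of_int k" for m
  proof -
    have "det_on {x. weight x = m} (V T) = exp (- \<i> * complex_of_real (r m))"
      using det_evolution[OF T0 pc u1 V, of m] real_int[of m] unfolding \<tau>_def by simp
    moreover obtain k :: int where "Im (- \<i> * complex_of_real (r m)) - of_int k * (2 * pi) = Arg (exp (- \<i> * complex_of_real (r m)))"
      using Arg_exp_diff_2pi by blast
    ultimately have "theta (V T) m = - r m - 2 * pi * of_int k"
      unfolding theta_def by (simp add: algebra_simps)
    then show ?thesis by blast
  qed
  obtain k1 where k1: "theta (V T) (n - 1) = - r (n - 1) - 2 * pi * of_int k1" using th by blast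
  obtain k2 where k2: "theta (V T) 1 = - r 1 - 2 * pi * of_int k2" using th by blast
  obtain k3 where k3: "theta (V T) n = - r n - 2 * pi * of_int k3" using th by blast
  obtain k4 where k4: "theta (V T) 0 = - r 0 - 2 * pi * of_int k4" using th by blast
  define R where "R = r (n - 1) - r 1 - (real n - 2) * (r n - r 0)"
  define k where "k = - (k1 - k2 - (int n - 2) * (k3 - k4))"
  have rn: "real n - 2 = of_int (int n - 2)" by simp
  have lhs: "theta (V T) (n - 1) - theta (V T) 1
        - (real n - 2) * (theta (V T) n - theta (V T) 0) - 2 * pi * of_int k = - R"
    unfolding k1 k2 k3 k4 R_def k_def rn by (simp add: algebra_simps)
  have trint: "(\<lambda>t. trace (H t ** Cl l)) integrable_on {0..T}" for l
    unfolding trace_Cl by (intro integrable_sum integrable_on_mult_left eint) simp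
  have pw: "(\<Sum>l\<in>{l. 1 \<le> l \<and> l \<le> n \<and> odd l}. (of_nat l - 1) * trace (H t ** Cl l))
     = 2 ^ n / 4 * (\<tau> (n - 1) t - \<tau> 1 t - (of_nat n - 2) * (\<tau> n t - \<tau> 0 t))" for t
  proof -
    have "(\<Sum>l\<in>{l. 1 \<le> l \<and> l \<le> n \<and> odd l}. (of_nat l - 1) * trace (H t ** Cl l))
       = 2 ^ n / 4 * (\<Sum>x\<in>UNIV. H t $ x $ x * dcoef n (weight x))"
      unfolding n_def by (rule trace_Cl_sum) (use n2 n_def in simp)
    also have "(\<Sum>x\<in>UNIV. H t $ x $ x * dcoef n (weight x)) = \<tau> (n - 1) t - \<tau> 1 t - (of_nat n - 2) * (\<tau> n t - \<tau> 0 t)"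
    proof -
      define I where "I m (x::'q \<Rightarrow> bool) = (if weight x = m then 1 else 0 :: complex)" for m x
      define h where "h x = H t $ x $ x" for x
      have ind: "(\<Sum>x\<in>UNIV. h x * I m x) = \<tau> m t" for m
        unfolding \<tau>_def sum_weight_filter I_def h_def by (rule sum.cong) auto
      have dc: "dcoef n (weight x) = I (n - 1) x - I 1 x - (of_nat n - 2) * (I n x - I 0 x)" for x
        by (simp add: dcoef_def I_def)
      have "(\<Sum>x\<in>UNIV. H t $ x $ x * dcoef n (weight x)) =
         (\<Sum>x\<in>UNIV. h x * I (n - 1) x - h x * I 1 x - (of_nat n - 2) * (h x * I n x - h x * I 0 x))"
        unfolding dc h_def by (rule sum.cong) (simp_all add: algebra_simps)
      also have "\<dots> = (\<Sum>x\<in>UNIV. h x * I (n - 1) x) - (\<Sum>x\<in>UNIV. h x * I 1 x)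
           - (of_nat n - 2) * ((\<Sum>x\<in>UNIV. h x * I n x) - (\<Sum>x\<in>UNIV. h x * I 0 x))"
        by (simp only: sum_subtractf sum_distrib_left[symmetric])
      finally show ?thesis unfolding ind .
    qed
    finally show ?thesis .
  qed
  have "(\<Sum>l\<in>{l. 1 \<le> l \<and> l \<le> n \<and> odd l}. (of_nat l - 1) * integral {0..T} (\<lambda>t. trace (H t ** Cl l)))
      = integral {0..T} (\<lambda>t. \<Sum>l\<in>{l. 1 \<le> l \<and> l \<le> n \<and> odd l}. (of_nat l - 1) * trace (H t ** Cl l))"
    by (subst integral_sum) (auto intro: integrable_on_mult_right trint)
  also have "\<dots> = integral {0..T} (\<lambda>t. 2 ^ n / 4 * (\<tau> (n - 1) t - \<tau> 1 t - (of_nat n - 2) * (\<tau> n t - \<tau> 0 t)))"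
    unfolding pw ..
  also have "\<dots> = 2 ^ n / 4 * (integral {0..T} (\<tau> (n - 1)) - integral {0..T} (\<tau> 1)
       - (of_nat n - 2) * (integral {0..T} (\<tau> n) - integral {0..T} (\<tau> 0)))"
    by (simp add: integral_diff integrable_diff integrable_on_mult_right tint)
  also have "\<dots> = 2 ^ n / 4 * complex_of_real R"
    unfolding real_int R_def by simp
  finally have rhs: "(\<Sum>l\<in>{l. 1 \<le> l \<and> l \<le> n \<and> odd l}. (of_nat l - 1) * integral {0..T} (\<lambda>t. trace (H t ** Cl l)))
      = 2 ^ n / 4 * complex_of_real R" .
  show ?thesis
    unfolding rhs by (rule exI[of _ k], unfold lhs) simp
qed

end
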